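(* Let $\{\nu_{nk}\}_{n\geq1,1\leq k\leq k_n}\subset\mathscr{P}_{\mathbb{T}^d}$ be a triangular array such that $\rho_n=\sum_{k=1}^{k_n}\nu_{nk}$ satisfies conditions (iii) and (iv). Let $\{\boldsymbol\theta_{nk}\}\subset(-\pi,\pi]^d$ satisfy $\lim_{n\to\infty}\sum_{k=1}^{k_n}(\mathbf{1}-\cos\boldsymbol\theta_{nk})=\mathbf{0}$ (componentwise cosine). Then $\widetilde\rho_n(\cdot)=\sum_{k=1}^{k_n}\nu_{nk}(e^{i\boldsymbol\theta_{nk}}\cdot)$ also satisfies conditions (iii) and (iv). Moreover, $\widetilde\rho_n\Rightarrow_{\mathbf{1}}\rho$ whenever $\rho_n\Rightarrow_{\mathbf{1}}\rho$, and $\rho_n$ and $\widetilde\rho_n$ define the same quadratic form $Q$ in (iv).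
   Context: $\mathscr{P}_{\mathbb{T}^d}$: Borel probability measures on $\mathbb{T}^d$. $\mathscr{M}_{\mathbb{T}^d}^{\mathbf{1}}$: positive Borel measures on $\mathbb{T}^d$ finite on every Borel set bounded away from $\mathbf{1}$. $\rho_n\Rightarrow_{\mathbf{1}}\rho$ means $\int f\,d\rho_n\to\int f\,d\rho$ for all bounded continuous $f$ with support bounded away from $\mathbf{1}$. Notation: $\arg\boldsymbol s\in(-\pi,\pi]^d$ componentwise, $\Im\boldsymbol s$ componentwise, $\mathscr{U}_\epsilon=\{\boldsymbol s:\|\arg\boldsymbol s\|<\epsilon\}$, $e^{i\boldsymbol\theta}B=\{(e^{i\theta_1}s_1,\dots,e^{i\theta_d}s_d):\boldsymbol s\in B\}$. Conditions on a sequence $\{\rho_n\}\subset\mathscr{M}_{\mathbb{T}^d}^{\mathbf{1}}$: (iii) there is $\rho\in\mathscr{M}_{\mathbb{T}^d}^{\mathbf{1}}$ with $\rho(\{\mathbf{1}\})=0$ and $\rho_n\Rightarrow_{\mathbf{1}}\rho$; (iv) for every $\boldsymbol p\in\mathbb{Z}^d$, $\lim_{\epsilon\to0}\limsup_n\int_{\mathscr{U}_\epsilon}\langle\boldsymbol p,\Im\boldsymbol s\rangle^2d\rho_n=\lim_{\epsilon\to0}\liminf_n\int_{\mathscr{U}_\epsilon}\langle\boldsymbol p,\Im\boldsymbol s\rangle^2d\rho_n=:Q(\boldsymbol p)\in\mathbb{R}$. *)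

theory Defs
  imports "HOL-Probability.Probability"
begin

text \<open>The d-torus T^d, realised inside complex^'d (the dimension d = CARD('d)).\<close>
definition torus :: "(complex ^ 'd) set" where
  "torus = {s. \<forall>i. cmod (s $ i) = 1}"

definition one_t :: "complex ^ 'd" where
  "one_t = (\<chi> i. 1)"

definition torus_borel :: "(complex ^ 'd) measure" where
  "torus_borel = restrict_space borel torus"

definition prob_torus :: "(complex ^ 'd) measure \<Rightarrow> bool" where
  "prob_torus \<nu> \<longleftrightarrow> prob_space \<nu> \<and> sets \<nu> = sets torus_borel"

definition away_from_one :: "(complex ^ 'd) set \<Rightarrow> bool" where
  "away_from_one B \<longleftrightarrow> (\<exists>\<delta>>0. \<forall>s\<in>B. dist s one_t \<ge> \<delta>)"

definition M1 :: "(complex ^ 'd) measure set" where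
  "M1 = {\<rho>. sets \<rho> = sets torus_borel \<and>
            (\<forall>B \<in> sets torus_borel. away_from_one B \<longrightarrow> emeasure \<rho> B < \<infinity>)}"

definition test_fun :: "(complex ^ 'd \<Rightarrow> real) \<Rightarrow> bool" where
  "test_fun f \<longleftrightarrow> continuous_on torus f \<and> bounded (f ` torus) \<and>
     away_from_one (closure {s \<in> torus. f s \<noteq> 0})"

definition conv_one :: "(nat \<Rightarrow> (complex ^ 'd) measure) \<Rightarrow> (complex ^ 'd) measure \<Rightarrow> bool" where
  "conv_one \<rho>s \<rho> \<longleftrightarrow>
     (\<forall>f. test_fun f \<longrightarrow> (\<lambda>n. integral\<^sup>L (\<rho>s n) f) \<longlonglongrightarrow> integral\<^sup>L \<rho> f)"

definition argv :: "complex ^ 'd \<Rightarrow> real ^ 'd" where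
  "argv s = (\<chi> i. Arg (s $ i))"

definition imv :: "complex ^ 'd \<Rightarrow> real ^ 'd" where
  "imv s = (\<chi> i. Im (s $ i))"

definition U_eps :: "real \<Rightarrow> (complex ^ 'd) set" where
  "U_eps \<epsilon> = {s \<in> torus. norm (argv s) < \<epsilon>}"

definition cond_iii :: "(nat \<Rightarrow> (complex ^ 'd) measure) \<Rightarrow> bool" where
  "cond_iii \<rho>s \<longleftrightarrow> (\<exists>\<rho> \<in> M1. emeasure \<rho> {one_t} = 0 \<and> conv_one \<rho>s \<rho>)"

definition cond_iv :: "(nat \<Rightarrow> (complex ^ 'd) measure) \<Rightarrow> (int ^ 'd \<Rightarrow> real) \<Rightarrow> bool" where
  "cond_iv \<rho>s Q \<longleftrightarrow> (\<forall>p :: int ^ 'd.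
     let F = (\<lambda>\<epsilon> n. ereal (\<integral>s \<in> U_eps \<epsilon>. ((\<Sum>i\<in>UNIV. of_int (p $ i) * imv s $ i))\<^sup>2 \<partial>(\<rho>s n)))
     in ((\<lambda>\<epsilon>. limsup (F \<epsilon>)) \<longlongrightarrow> ereal (Q p)) (at_right 0) \<and>
        ((\<lambda>\<epsilon>. liminf (F \<epsilon>)) \<longlongrightarrow> ereal (Q p)) (at_right 0))"

definition sum_meas :: "nat set \<Rightarrow> (nat \<Rightarrow> (complex ^ 'd) measure) \<Rightarrow> (complex ^ 'd) measure" where
  "sum_meas K \<mu> = measure_of torus (sets torus_borel) (\<lambda>A. \<Sum>k\<in>K. emeasure (\<mu> k) A)"

definition rot :: "real ^ 'd \<Rightarrow> complex ^ 'd \<Rightarrow> complex ^ 'd" where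
  "rot \<theta> s = (\<chi> i. cis (\<theta> $ i) * s $ i)"

text \<open>The measure B |-> nu(e^{i theta} B), i.e. the image of nu under s |-> e^{-i theta} s.\<close>
definition rotate_meas :: "real ^ 'd \<Rightarrow> (complex ^ 'd) measure \<Rightarrow> (complex ^ 'd) measure" where
  "rotate_meas \<theta> \<nu> = distr \<nu> torus_borel (rot (- \<theta>))"

end

theory Submission
  imports Defs
begin


lemma space_torus_borel[simp]: "space torus_borel = torus"
  by (simp add: torus_borel_def space_restrict_space)

lemma closed_torus: "closed (torus :: (complex^'d) set)"
proof -
  have eqT: "torus = (\<Inter>i. {s::complex^'d. cmod (s $ i) = 1})" by (auto simp: torus_def)
  have "closed (\<Inter>i. {s::complex^'d. cmod (s $ i) = 1})"
    by (intro closed_INT ballI closed_Collect_eq continuous_intros)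
  then show ?thesis unfolding eqT .
qed

lemma bounded_torus: "bounded (torus :: (complex^'d) set)"
proof -
  have "norm s \<le> sqrt (real CARD('d))" if "s \<in> torus" for s :: "complex^'d"
  proof -
    show ?thesis using that by (simp add: torus_def norm_vec_def L2_set_def)
  qed
  then show ?thesis by (auto simp: bounded_iff)
qed

lemma compact_torus: "compact (torus :: (complex^'d) set)"
  using closed_torus bounded_torus by (simp add: compact_eq_bounded_closed)

lemma Arg_measurable[measurable]: "Arg \<in> borel_measurable borel"
proof -
  have eq: "Arg = (\<lambda>z. indicator (-\<real>\<^sub>\<le>\<^sub>0) z *\<^sub>R Arg z + indicator (\<real>\<^sub>\<le>\<^sub>0) z *\<^sub>R (if z = 0 then 0 else pi))"
  proof
    fix z :: complex
    show "Arg z = indicator (-\<real>\<^sub>\<le>\<^sub>0) z *\<^sub>R Arg z + indicator (\<real>\<^sub>\<le>\<^sub>0) z *\<^sub>R (if z = 0 then 0 else pi)"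
    proof (cases "z \<in> \<real>\<^sub>\<le>\<^sub>0")
      case True
      then show ?thesis
        by (cases "z = 0") (simp add: indicator_def Arg_zero, auto simp: indicator_def Arg_eq_pi complex_nonpos_Reals_iff complex_eq_iff order_le_less)
    qed (auto simp: indicator_def)
  qed
  have "(\<lambda>z. indicator (-\<real>\<^sub>\<le>\<^sub>0) z *\<^sub>R Arg z) \<in> borel_measurable borel"
    by (rule borel_measurable_continuous_on_indicator) (auto intro: continuous_on_Arg)
  moreover have "(\<lambda>z::complex. indicator (\<real>\<^sub>\<le>\<^sub>0) z *\<^sub>R (if z = 0 then 0 else pi)) \<in> borel_measurable borel"
    by measurable
  ultimately have "(\<lambda>z. indicator (-\<real>\<^sub>\<le>\<^sub>0) z *\<^sub>R Arg z + indicator (\<real>\<^sub>\<le>\<^sub>0) z *\<^sub>R (if z = 0 then 0 else pi)) \<in> borel_measurable borel"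
    by (rule borel_measurable_add)
  then show ?thesis by (rule ssubst[where P="\<lambda>f. f \<in> borel_measurable borel", OF eq])
qed

lemma vec_nth_measurable[measurable]: "(\<lambda>s::complex^'d. s $ i) \<in> borel_measurable borel"
  by (intro borel_measurable_continuous_onI continuous_intros)

lemma norm_argv: "norm (argv s) = sqrt (\<Sum>i\<in>UNIV. (Arg (s $ i))\<^sup>2)"
  by (simp add: argv_def norm_vec_def L2_set_def)

lemma U_eps_sets: "(U_eps e :: (complex^'d) set) \<in> sets torus_borel"
proof -
  have "{s::complex^'d. sqrt (\<Sum>i\<in>UNIV. (Arg (s $ i))\<^sup>2) < e} \<in> sets borel" by measurable
  then have "torus \<inter> {s::complex^'d. sqrt (\<Sum>i\<in>UNIV. (Arg (s $ i))\<^sup>2) < e} \<in> sets torus_borel"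
    unfolding torus_borel_def by (auto simp: sets_restrict_space)
  moreover have "U_eps e = torus \<inter> {s::complex^'d. sqrt (\<Sum>i\<in>UNIV. (Arg (s $ i))\<^sup>2) < e}"
    by (auto simp: U_eps_def norm_argv)
  ultimately show ?thesis by simp
qed



lemma sa_torus: "sigma_algebra torus (sets torus_borel)"
  using sets.sigma_algebra_axioms[of torus_borel] by simp

lemma sum_meas_sets:
  fixes \<mu> :: "nat \<Rightarrow> (complex^'d) measure"
  shows "sets (sum_meas K \<mu>) = sets torus_borel"
proof -
  have "sets torus_borel \<subseteq> Pow (torus :: (complex^'d) set)" using sets.space_closed[of torus_borel] by simp
  then show ?thesis unfolding sum_meas_def
    by (simp add: sets_measure_of sigma_algebra.sigma_sets_eq[OF sa_torus])
qed

lemma sum_meas_space[simp]: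
  fixes \<mu> :: "nat \<Rightarrow> (complex^'d) measure"
  shows "space (sum_meas K \<mu>) = torus"
  using sets_eq_imp_space_eq[OF sum_meas_sets] by simp

lemma sum_meas_emeasure:
  fixes \<mu> :: "nat \<Rightarrow> (complex^'d) measure"
  assumes K: "finite K" and S: "\<And>k. k \<in> K \<Longrightarrow> sets (\<mu> k) = sets torus_borel"
    and A: "A \<in> sets torus_borel"
  shows "emeasure (sum_meas K \<mu>) A = (\<Sum>k\<in>K. emeasure (\<mu> k) A)"
  unfolding sum_meas_def
proof (rule emeasure_measure_of_sigma[OF sa_torus _ _ A])
  show "positive (sets torus_borel) (\<lambda>A. \<Sum>k\<in>K. emeasure (\<mu> k) A)"
    by (simp add: positive_def)
  show "countably_additive (sets torus_borel) (\<lambda>A. \<Sum>k\<in>K. emeasure (\<mu> k) A)"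
    unfolding countably_additive_def
  proof (intro allI impI)
    fix B :: "nat \<Rightarrow> (complex^'d) set"
    assume B: "range B \<subseteq> sets torus_borel" "disjoint_family B" "\<Union> (range B) \<in> sets torus_borel"
    have "(\<Sum>i. \<Sum>k\<in>K. emeasure (\<mu> k) (B i)) = (\<Sum>k\<in>K. \<Sum>i. emeasure (\<mu> k) (B i))"
      by (rule suminf_sum) (rule summableI)
    also have "\<dots> = (\<Sum>k\<in>K. emeasure (\<mu> k) (\<Union> (range B)))"
      using B S by (intro sum.cong refl suminf_emeasure) auto
    finally show "(\<Sum>i. \<Sum>k\<in>K. emeasure (\<mu> k) (B i)) = (\<Sum>k\<in>K. emeasure (\<mu> k) (\<Union> (range B)))" .
  qed
qed

lemma meas_transfer:
  assumes S: "sets M = sets torus_borel" and f: "f \<in> borel_measurable torus_borel"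
  shows "f \<in> borel_measurable M"
proof -
  have "measurable M borel = measurable torus_borel borel" by (rule measurable_cong_sets[OF S refl])
  then show ?thesis using f by metis
qed

lemma nn_integral_sum_meas:
  fixes \<mu> :: "nat \<Rightarrow> (complex^'d) measure"
  assumes K: "finite K" and S: "\<And>k. k \<in> K \<Longrightarrow> sets (\<mu> k) = sets torus_borel"
    and f: "f \<in> borel_measurable torus_borel"
  shows "(\<integral>\<^sup>+x. f x \<partial>sum_meas K \<mu>) = (\<Sum>k\<in>K. \<integral>\<^sup>+x. f x \<partial>\<mu> k)"
  using f
proof (induct rule: borel_measurable_induct)
  case (cong f g)
  have sp: "k \<in> K \<Longrightarrow> space (\<mu> k) = torus" for k using sets_eq_imp_space_eq[OF S[of k]] by simp
  have "(\<integral>\<^sup>+x. f x \<partial>sum_meas K \<mu>) = (\<integral>\<^sup>+x. g x \<partial>sum_meas K \<mu>)"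
    using cong by (intro nn_integral_cong) auto
  also have "\<dots> = (\<Sum>k\<in>K. \<integral>\<^sup>+x. g x \<partial>\<mu> k)" by fact
  also have "\<dots> = (\<Sum>k\<in>K. \<integral>\<^sup>+x. f x \<partial>\<mu> k)"
    using cong sp by (intro sum.cong refl nn_integral_cong) auto
  finally show ?case .
next
  case (set A)
  then have "A \<in> sets (sum_meas K \<mu>)" "\<And>k. k \<in> K \<Longrightarrow> A \<in> sets (\<mu> k)"
    using S sum_meas_sets[of K \<mu>] by auto
  then show ?case using sum_meas_emeasure[where \<mu>=\<mu>, OF K S set] by simp
next
  case (mult u c)
  have m: "u \<in> borel_measurable (sum_meas K \<mu>)" "\<And>k. k \<in> K \<Longrightarrow> u \<in> borel_measurable (\<mu> k)"
    using mult(2) S by (auto intro: meas_transfer[OF sum_meas_sets] meas_transfer[OF S])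
  show ?case using m mult(4) by (simp add: nn_integral_cmult sum_distrib_left)
next
  case (add u v)
  have m: "u \<in> borel_measurable (sum_meas K \<mu>)" "\<And>k. k \<in> K \<Longrightarrow> u \<in> borel_measurable (\<mu> k)"
    "v \<in> borel_measurable (sum_meas K \<mu>)" "\<And>k. k \<in> K \<Longrightarrow> v \<in> borel_measurable (\<mu> k)"
    using add(1,4) S by (auto intro: meas_transfer[OF sum_meas_sets] meas_transfer[OF S])
  show ?case using m add(3,7) by (simp add: nn_integral_add sum.distrib)
next
  case (seq U)
  have m: "U i \<in> borel_measurable (sum_meas K \<mu>)" "\<And>k. k \<in> K \<Longrightarrow> U i \<in> borel_measurable (\<mu> k)" for i
    using seq(1) S by (auto intro: meas_transfer[OF sum_meas_sets] meas_transfer[OF S])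
  have "(\<integral>\<^sup>+x. (SUP i. U i) x \<partial>sum_meas K \<mu>) = (SUP i. \<integral>\<^sup>+x. U i x \<partial>sum_meas K \<mu>)"
    unfolding SUP_apply by (rule nn_integral_monotone_convergence_SUP[OF seq(4) m(1)])
  also have "\<dots> = (SUP i. \<Sum>k\<in>K. \<integral>\<^sup>+x. U i x \<partial>\<mu> k)" using seq(3) by simp
  also have "\<dots> = (\<Sum>k\<in>K. SUP i. \<integral>\<^sup>+x. U i x \<partial>\<mu> k)"
    using seq(4) by (intro ennreal_SUP_sum incseq_nn_integral)
  also have "\<dots> = (\<Sum>k\<in>K. \<integral>\<^sup>+x. (SUP i. U i) x \<partial>\<mu> k)"
  proof (intro sum.cong refl)
    fix k assume k: "k \<in> K"
    have mk: "\<And>i. U i \<in> borel_measurable (\<mu> k)" using m(2) k by blast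
    show "(SUP i. \<integral>\<^sup>+x. U i x \<partial>\<mu> k) = (\<integral>\<^sup>+x. (SUP i. U i) x \<partial>\<mu> k)"
      unfolding SUP_apply by (rule nn_integral_monotone_convergence_SUP[OF seq(4) mk, symmetric])
  qed
  finally show ?case .
qed

lemma finite_measure_sum_meas:
  fixes \<mu> :: "nat \<Rightarrow> (complex^'d) measure"
  assumes K: "finite K" and S: "\<And>k. k \<in> K \<Longrightarrow> sets (\<mu> k) = sets torus_borel"
    and F: "\<And>k. k \<in> K \<Longrightarrow> finite_measure (\<mu> k)"
  shows "finite_measure (sum_meas K \<mu>)"
proof
  have tb: "torus \<in> sets (torus_borel :: (complex^'d) measure)" using sets.top[of torus_borel] by simp
  have "emeasure (sum_meas K \<mu>) torus = (\<Sum>k\<in>K. emeasure (\<mu> k) torus)"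
    by (rule sum_meas_emeasure[where \<mu>=\<mu>, OF K S tb])
  also have "\<dots> < \<infinity>"
  proof -
    have "emeasure (\<mu> k) torus < \<infinity>" if "k \<in> K" for k
    proof -
      have sp: "space (\<mu> k) = torus" using sets_eq_imp_space_eq[OF S[OF that]] by simp
      have "emeasure (\<mu> k) (space (\<mu> k)) \<noteq> top" by (rule finite_measure.emeasure_finite[OF F[OF that]])
      then show ?thesis using sp by (simp add: less_top[symmetric])
    qed
    then show ?thesis using K by simp
  qed
  finally show "emeasure (sum_meas K \<mu>) (space (sum_meas K \<mu>)) \<noteq> \<infinity>" by simp
qed

lemma integrable_bounded_torus:
  assumes F: "finite_measure M" and S: "sets M = sets torus_borel"
    and f: "f \<in> borel_measurable torus_borel" and B: "\<And>x. x \<in> torus \<Longrightarrow> \<bar>f x\<bar> \<le> (B::real)"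
  shows "integrable M f"
proof -
  have sp: "space M = torus" using sets_eq_imp_space_eq[OF S] by simp
  show ?thesis
    using B f sp by (intro finite_measure.integrable_const_bound[OF F, where B=B])
      (auto simp: measurable_cong_sets[OF S refl])
qed

lemma one_t_torus: "one_t \<in> torus"
  by (simp add: one_t_def torus_def)

lemma integral_sum_meas_nonneg:
  fixes \<mu> :: "nat \<Rightarrow> (complex^'d) measure"
  assumes K: "finite K" and S: "\<And>k. k \<in> K \<Longrightarrow> sets (\<mu> k) = sets torus_borel"
    and F: "\<And>k. k \<in> K \<Longrightarrow> finite_measure (\<mu> k)"
    and f: "f \<in> borel_measurable torus_borel" and B: "\<And>x. x \<in> torus \<Longrightarrow> \<bar>f x\<bar> \<le> (B::real)"
    and nn: "\<And>x. 0 \<le> f x"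
  shows "integral\<^sup>L (sum_meas K \<mu>) f = (\<Sum>k\<in>K. integral\<^sup>L (\<mu> k) f)"
proof -
  have I: "integrable (\<mu> k) f" if "k \<in> K" for k
    using integrable_bounded_torus[OF F[OF that] S[OF that] f B] by simp
  have IS: "integrable (sum_meas K \<mu>) f"
    using integrable_bounded_torus[OF finite_measure_sum_meas[OF K S F] sum_meas_sets f B] by simp
  have "ennreal (integral\<^sup>L (sum_meas K \<mu>) f) = (\<integral>\<^sup>+x. f x \<partial>sum_meas K \<mu>)"
    using IS nn by (intro nn_integral_eq_integral[symmetric]) auto
  also have "\<dots> = (\<Sum>k\<in>K. \<integral>\<^sup>+x. f x \<partial>\<mu> k)"
    using nn_integral_sum_meas[OF K S] f by simp
  also have "\<dots> = (\<Sum>k\<in>K. ennreal (integral\<^sup>L (\<mu> k) f))"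
    using I nn by (intro sum.cong refl nn_integral_eq_integral) auto
  also have "\<dots> = ennreal (\<Sum>k\<in>K. integral\<^sup>L (\<mu> k) f)"
    using nn by (intro sum_ennreal) (auto intro: integral_nonneg)
  finally show ?thesis
    using nn by (subst (asm) ennreal_inj) (auto intro!: integral_nonneg sum_nonneg)
qed

lemma integral_sum_meas:
  fixes \<mu> :: "nat \<Rightarrow> (complex^'d) measure"
  assumes K: "finite K" and S: "\<And>k. k \<in> K \<Longrightarrow> sets (\<mu> k) = sets torus_borel"
    and F: "\<And>k. k \<in> K \<Longrightarrow> finite_measure (\<mu> k)"
    and f: "f \<in> borel_measurable torus_borel" and B: "\<And>x. x \<in> torus \<Longrightarrow> \<bar>f x\<bar> \<le> (B::real)"
  shows "integral\<^sup>L (sum_meas K \<mu>) f = (\<Sum>k\<in>K. integral\<^sup>L (\<mu> k) f)"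
proof -
  define fp where "fp x = max (f x) 0" for x
  define fm where "fm x = max (- f x) 0" for x
  have fpm: "f = (\<lambda>x. fp x - fm x)" by (auto simp: fp_def fm_def fun_eq_iff)
  have mp: "fp \<in> borel_measurable torus_borel" "fm \<in> borel_measurable torus_borel"
    using f unfolding fp_def fm_def by auto
  have "0 \<le> B" using B[OF one_t_torus] by simp
  have bp: "\<And>x. x \<in> torus \<Longrightarrow> \<bar>fp x\<bar> \<le> B" "\<And>x. x \<in> torus \<Longrightarrow> \<bar>fm x\<bar> \<le> B"
    using B \<open>0 \<le> B\<close> by (auto simp: fp_def fm_def abs_le_iff)
  have ip: "integrable M fp" "integrable M fm" if "finite_measure M" "sets M = sets torus_borel" for M
    using integrable_bounded_torus[OF that mp(1) bp(1)] integrable_bounded_torus[OF that mp(2) bp(2)] by auto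
  have FS: "finite_measure (sum_meas K \<mu>)" by (rule finite_measure_sum_meas[OF K S F])
  have "integral\<^sup>L (sum_meas K \<mu>) f = integral\<^sup>L (sum_meas K \<mu>) fp - integral\<^sup>L (sum_meas K \<mu>) fm"
    using ip[OF FS sum_meas_sets] by (subst fpm) (rule Bochner_Integration.integral_diff)
  also have "\<dots> = (\<Sum>k\<in>K. integral\<^sup>L (\<mu> k) fp) - (\<Sum>k\<in>K. integral\<^sup>L (\<mu> k) fm)"
    using integral_sum_meas_nonneg[where \<mu>=\<mu>, OF K S F mp(1) bp(1)] integral_sum_meas_nonneg[where \<mu>=\<mu>, OF K S F mp(2) bp(2)]
    unfolding fp_def[abs_def] fm_def[abs_def] by simp
  also have "\<dots> = (\<Sum>k\<in>K. integral\<^sup>L (\<mu> k) f)"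
    unfolding sum_subtractf[symmetric]
    using ip[OF F S] by (intro sum.cong refl) (simp add: fpm Bochner_Integration.integral_diff)
  finally show ?thesis .
qed

lemma rot_torus: "s \<in> torus \<Longrightarrow> rot \<phi> s \<in> torus"
  by (simp add: torus_def rot_def norm_mult)

lemma rot_cont: "continuous_on UNIV (rot \<phi>)"
  unfolding rot_def by (intro continuous_intros)

lemma rot_meas: "rot \<phi> \<in> measurable torus_borel torus_borel"
proof -
  have "rot \<phi> \<in> borel_measurable torus_borel"
    unfolding torus_borel_def
    by (rule borel_measurable_continuous_on_restrict) (rule continuous_on_subset[OF rot_cont], simp)
  then show ?thesis
    unfolding torus_borel_def
    by (intro measurable_restrict_space2) (auto simp: rot_torus[unfolded torus_borel_def] space_restrict_space)
qed

lemma rot_rot: "rot \<phi> (rot (-\<phi>) s) = s"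
  by (simp add: rot_def vec_eq_iff mult.assoc[symmetric] cis_mult)

lemma integral_rotate:
  assumes S: "sets \<nu> = sets torus_borel" and f: "f \<in> borel_measurable torus_borel"
  shows "integral\<^sup>L (rotate_meas \<theta> \<nu>) (f :: _ \<Rightarrow> real) = integral\<^sup>L \<nu> (\<lambda>s. f (rot (-\<theta>) s))"
  unfolding rotate_meas_def
  using f rot_meas[of "-\<theta>"] by (intro integral_distr) (auto simp: measurable_cong_sets[OF S refl])

lemma rotate_meas_sets: "sets (rotate_meas \<theta> \<nu>) = sets torus_borel"
  by (simp add: rotate_meas_def)

lemma rotate_meas_prob:
  assumes "prob_torus \<nu>" shows "prob_space (rotate_meas \<theta> \<nu>)"
proof -
  have S: "sets \<nu> = sets torus_borel" using assms by (simp add: prob_torus_def)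
  have "measurable \<nu> torus_borel = measurable torus_borel torus_borel" by (rule measurable_cong_sets[OF S refl])
  then have "rot (-\<theta>) \<in> measurable \<nu> torus_borel"
    using rot_meas[of "-\<theta>"] by metis
  then show ?thesis using assms unfolding rotate_meas_def prob_torus_def
    by (intro prob_space.prob_space_distr) auto
qed



definition Tc :: "real^'d \<Rightarrow> real" where
  "Tc \<phi> = (\<Sum>i\<in>UNIV. 1 - cos (\<phi> $ i))"

lemma Tc_nonneg: "0 \<le> Tc \<phi>"
  unfolding Tc_def by (intro sum_nonneg) auto

lemma cmod_cis_minus_1: "(cmod (cis (-t) - 1))\<^sup>2 = 2 * (1 - cos t)"
proof -
  have "(cmod (cis (-t) - 1))\<^sup>2 = (cos t - 1)\<^sup>2 + (sin t)\<^sup>2" by (simp add: cmod_power2)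
  also have "\<dots> = 2 * (1 - cos t)"
    using sin_cos_squared_add[of t] by (simp add: power2_eq_square algebra_simps)
  finally show ?thesis .
qed

lemma norm_rot_diff:
  assumes "s \<in> torus"
  shows "norm (rot (-\<phi>) s - s) = sqrt (2 * Tc \<phi>)"
proof -
  have "(cmod ((rot (-\<phi>) s - s) $ i))\<^sup>2 = 2 * (1 - cos (\<phi> $ i))" for i
  proof -
    have "(rot (-\<phi>) s - s) $ i = (cis (- (\<phi> $ i)) - 1) * s $ i"
      by (simp add: rot_def algebra_simps)
    then have "cmod ((rot (-\<phi>) s - s) $ i) = cmod (cis (- (\<phi> $ i)) - 1)"
      using assms by (simp add: torus_def norm_mult)
    then show ?thesis using cmod_cis_minus_1 by simp
  qed
  then show ?thesis
    by (simp add: norm_vec_def L2_set_def Tc_def sum_distrib_left)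
qed

lemma int_sum_prob:
  assumes K: "finite K" and P: "\<And>k. k \<in> K \<Longrightarrow> prob_torus (\<mu> k)"
    and f: "f \<in> borel_measurable torus_borel" and B: "\<And>x. x \<in> torus \<Longrightarrow> \<bar>f x\<bar> \<le> (B::real)"
  shows "integral\<^sup>L (sum_meas K \<mu>) f = (\<Sum>k\<in>K. integral\<^sup>L (\<mu> k) f)"
  using P by (intro integral_sum_meas[OF K _ _ f B]) (auto simp: prob_torus_def intro: prob_space.finite_measure)

lemma int_sum_rot:
  assumes K: "finite K" and P: "\<And>k. k \<in> K \<Longrightarrow> prob_torus (\<mu> k)"
    and f: "f \<in> borel_measurable torus_borel" and B: "\<And>x. x \<in> torus \<Longrightarrow> \<bar>f x\<bar> \<le> (B::real)"
  shows "integral\<^sup>L (sum_meas K (\<lambda>k. rotate_meas (\<phi> k) (\<mu> k))) f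
        = (\<Sum>k\<in>K. integral\<^sup>L (\<mu> k) (\<lambda>s. f (rot (- \<phi> k) s)))"
proof -
  have "integral\<^sup>L (sum_meas K (\<lambda>k. rotate_meas (\<phi> k) (\<mu> k))) f
      = (\<Sum>k\<in>K. integral\<^sup>L (rotate_meas (\<phi> k) (\<mu> k)) f)"
    using P by (intro integral_sum_meas[OF K _ _ f B])
      (auto simp: rotate_meas_sets intro: prob_space.finite_measure rotate_meas_prob)
  also have "\<dots> = (\<Sum>k\<in>K. integral\<^sup>L (\<mu> k) (\<lambda>s. f (rot (- \<phi> k) s)))"
    using P f by (intro sum.cong refl integral_rotate) (auto simp: prob_torus_def)
  finally show ?thesis .
qed

lemma integrable_prob_torus:
  assumes "prob_torus \<mu>" "f \<in> borel_measurable torus_borel" "\<And>x. x \<in> torus \<Longrightarrow> \<bar>f x\<bar> \<le> (B::real)"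
  shows "integrable \<mu> f"
  using assms by (intro integrable_bounded_torus) (auto simp: prob_torus_def intro: prob_space.finite_measure)

lemma rot_comp_meas:
  "f \<in> borel_measurable torus_borel \<Longrightarrow> (\<lambda>s. f (rot \<phi> s)) \<in> borel_measurable torus_borel"
  using measurable_comp[OF rot_meas, of f borel \<phi>] by (simp add: comp_def)



lemma test_fun_meas: "test_fun f \<Longrightarrow> f \<in> borel_measurable torus_borel"
  unfolding test_fun_def torus_borel_def by (auto intro: borel_measurable_continuous_on_restrict)

lemma conv_part:
  fixes \<nu> :: "nat \<Rightarrow> nat \<Rightarrow> (complex ^ 'd) measure" and \<theta> :: "nat \<Rightarrow> nat \<Rightarrow> real ^ 'd"
  assumes prob: "\<And>n k. 1 \<le> n \<Longrightarrow> k \<in> {1..kn n} \<Longrightarrow> prob_torus (\<nu> n k)"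
    and tot: "(\<lambda>n. \<Sum>k\<in>{1..kn n}. Tc (\<theta> n k)) \<longlonglongrightarrow> 0"
    and conv: "conv_one (\<lambda>n. sum_meas {1..kn n} (\<nu> n)) \<rho>"
  shows "conv_one (\<lambda>n. sum_meas {1..kn n} (\<lambda>k. rotate_meas (\<theta> n k) (\<nu> n k))) \<rho>"
  unfolding conv_one_def
proof (intro allI impI)
  fix f :: "complex^'d \<Rightarrow> real"
  assume tf: "test_fun f"
  have fcont: "continuous_on torus f" using tf by (simp add: test_fun_def)
  obtain Bf where Bf: "\<And>x. x \<in> torus \<Longrightarrow> \<bar>f x\<bar> \<le> Bf"
    using tf unfolding test_fun_def bounded_iff by auto
  obtain \<delta> where \<delta>: "\<delta> > 0" "\<And>s. s \<in> closure {s \<in> torus. f s \<noteq> 0} \<Longrightarrow> \<delta> \<le> dist s one_t"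
    using tf unfolding test_fun_def away_from_one_def by auto
  have fz: "f s = 0" if "s \<in> torus" "dist s one_t < \<delta>" for s
    using \<delta>(2)[of s] closure_subset[of "{s \<in> torus. f s \<noteq> 0}"] that by force
  have fm: "f \<in> borel_measurable torus_borel" using tf by (rule test_fun_meas)
  define g where "g s = min 1 (max 0 (4 / \<delta> * dist s one_t - 1))" for s :: "complex^'d"
  have g01: "0 \<le> g s" "g s \<le> 1" for s by (auto simp: g_def)
  have gcont: "continuous_on UNIV g" unfolding g_def by (intro continuous_intros)
  have tg: "test_fun g"
    unfolding test_fun_def
  proof (intro conjI)
    show "continuous_on torus g" using gcont by (rule continuous_on_subset) auto
    show "bounded (g ` torus)" using g01 by (intro boundedI[where B=1]) auto
    have "closed {s::complex^'d. \<delta> / 4 \<le> dist s one_t}"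
      by (intro closed_Collect_le continuous_intros)
    moreover have "{s \<in> torus. g s \<noteq> 0} \<subseteq> {s. \<delta> / 4 \<le> dist s one_t}"
    proof
      fix s assume "s \<in> {s \<in> torus. g s \<noteq> 0}"
      then have "4 / \<delta> * dist s one_t - 1 > 0" by (auto simp: g_def)
      then have "\<delta> < 4 * dist s one_t" using \<delta>(1) by (simp add: field_simps)
      then show "s \<in> {s. \<delta> / 4 \<le> dist s one_t}" by simp
    qed
    ultimately have "closure {s \<in> torus. g s \<noteq> 0} \<subseteq> {s. \<delta> / 4 \<le> dist s one_t}"
      by (rule closure_minimal[rotated])
    then show "away_from_one (closure {s \<in> torus. g s \<noteq> 0})"
      unfolding away_from_one_def using \<delta>(1) by (intro exI[of _ "\<delta>/4"]) auto
  qed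
  have gm: "g \<in> borel_measurable torus_borel" using tg by (rule test_fun_meas)
  have "convergent (\<lambda>n. integral\<^sup>L (sum_meas {1..kn n} (\<nu> n)) g)"
    using conv tg unfolding conv_one_def convergent_def by blast
  then obtain Bg where Bg: "Bg > 0" "\<And>n. \<bar>integral\<^sup>L (sum_meas {1..kn n} (\<nu> n)) g\<bar> \<le> Bg"
    by (auto elim!: BseqE dest!: convergent_imp_Bseq)
  have uc: "uniformly_continuous_on torus f"
    by (rule compact_uniformly_continuous[OF fcont compact_torus])
  have D: "(\<lambda>n. integral\<^sup>L (sum_meas {1..kn n} (\<lambda>k. rotate_meas (\<theta> n k) (\<nu> n k))) f
              - integral\<^sup>L (sum_meas {1..kn n} (\<nu> n)) f) \<longlonglongrightarrow> 0"
  proof (rule LIMSEQ_I)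
    fix e :: real assume e: "0 < e"
    define e' where "e' = e / (2 * Bg)"
    have e': "e' > 0" using e Bg by (simp add: e'_def)
    obtain d where d: "d > 0" "\<And>x x'. x \<in> torus \<Longrightarrow> x' \<in> torus \<Longrightarrow> dist x' x < d \<Longrightarrow> dist (f x') (f x) < e'"
      using uc e' unfolding uniformly_continuous_on_def by metis
    define \<eta> where "\<eta> = min d (\<delta>/2)"
    have \<eta>: "\<eta> > 0" "\<eta> \<le> d" "\<eta> \<le> \<delta>/2" using d \<delta> by (auto simp: \<eta>_def)
    obtain N where N: "\<And>n. n \<ge> N \<Longrightarrow> \<bar>(\<Sum>k\<in>{1..kn n}. Tc (\<theta> n k))\<bar> < \<eta>\<^sup>2 / 2"
      using LIMSEQ_D[OF tot, of "\<eta>\<^sup>2/2"] \<eta> by auto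
    show "\<exists>no. \<forall>n\<ge>no. norm ((integral\<^sup>L (sum_meas {1..kn n} (\<lambda>k. rotate_meas (\<theta> n k) (\<nu> n k))) f
              - integral\<^sup>L (sum_meas {1..kn n} (\<nu> n)) f) - 0) < e"
    proof (intro exI[of _ "max N 1"] allI impI)
      fix n assume n: "max N 1 \<le> n"
      define K where "K = {1..kn n}"
      have P: "k \<in> K \<Longrightarrow> prob_torus (\<nu> n k)" for k using prob n by (auto simp: K_def)
      have small: "sqrt (2 * Tc (\<theta> n k)) < \<eta>" if k: "k \<in> K" for k
      proof -
        have "Tc (\<theta> n k) \<le> (\<Sum>k\<in>K. Tc (\<theta> n k))"
          using k by (intro member_le_sum) (auto simp: K_def Tc_nonneg)
        also have "\<dots> < \<eta>\<^sup>2 / 2" using N[of n] n by (auto simp: K_def)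
        finally have "2 * Tc (\<theta> n k) < \<eta>\<^sup>2" by simp
        then have "sqrt (2 * Tc (\<theta> n k)) < sqrt (\<eta>\<^sup>2)" by (rule real_sqrt_less_mono)
        then show ?thesis using \<eta> by simp
      qed
      have pw: "\<bar>f (rot (- \<theta> n k) s) - f s\<bar> \<le> e' * g s" if k: "k \<in> K" and s: "s \<in> torus" for k s
      proof -
        have rs: "rot (- \<theta> n k) s \<in> torus" using s by (rule rot_torus)
        have dd: "dist (rot (- \<theta> n k) s) s < \<eta>"
          using small[OF k] norm_rot_diff[OF s, of "\<theta> n k"] by (simp add: dist_norm)
        show ?thesis
        proof (cases "\<delta>/2 \<le> dist s one_t")
          case True
          then have "4 / \<delta> * dist s one_t \<ge> 2" using \<delta>(1) by (simp add: field_simps)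
          then have "g s = 1" by (simp add: g_def)
          moreover have "dist (f (rot (- \<theta> n k) s)) (f s) < e'"
            using d(2)[OF s rs] dd \<eta> by simp
          ultimately show ?thesis by (simp add: dist_real_def)
        next
          case False
          have "dist (rot (- \<theta> n k) s) one_t \<le> dist (rot (- \<theta> n k) s) s + dist s one_t"
            by (rule dist_triangle)
          also have "\<dots> < \<delta>" using dd \<eta> False by simp
          finally have "f (rot (- \<theta> n k) s) = 0" using fz rs by simp
          moreover have "f s = 0" using fz s False \<delta> by simp
          ultimately show ?thesis using g01[of s] e' by simp
        qed
      qed
      have I1: "integral\<^sup>L (sum_meas K (\<lambda>k. rotate_meas (\<theta> n k) (\<nu> n k))) f
              = (\<Sum>k\<in>K. integral\<^sup>L (\<nu> n k) (\<lambda>s. f (rot (- \<theta> n k) s)))"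
        by (rule int_sum_rot[OF _ P fm Bf]) (auto simp: K_def)
      have I2: "integral\<^sup>L (sum_meas K (\<nu> n)) f = (\<Sum>k\<in>K. integral\<^sup>L (\<nu> n k) f)"
        by (rule int_sum_prob[OF _ P fm Bf]) (auto simp: K_def)
      have I3: "integral\<^sup>L (sum_meas K (\<nu> n)) g = (\<Sum>k\<in>K. integral\<^sup>L (\<nu> n k) g)"
        using g01 by (intro int_sum_prob[OF _ P gm, where B=1]) (auto simp: K_def)
      have bnd: "\<bar>integral\<^sup>L (\<nu> n k) (\<lambda>s. f (rot (- \<theta> n k) s)) - integral\<^sup>L (\<nu> n k) f\<bar>
                 \<le> e' * integral\<^sup>L (\<nu> n k) g" if k: "k \<in> K" for k
      proof -
        have sp: "space (\<nu> n k) = torus"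
          using P[OF k] sets_eq_imp_space_eq[of "\<nu> n k" torus_borel] by (simp add: prob_torus_def)
        have i1: "integrable (\<nu> n k) (\<lambda>s. f (rot (- \<theta> n k) s))"
          using Bf rot_torus by (intro integrable_prob_torus[OF P[OF k] rot_comp_meas[OF fm], where B=Bf]) auto
        have i2: "integrable (\<nu> n k) f" by (rule integrable_prob_torus[OF P[OF k] fm Bf])
        have i3: "integrable (\<nu> n k) (\<lambda>s. e' * g s)"
        proof -
          have gm': "(\<lambda>s. e' * g s) \<in> borel_measurable torus_borel"
            using gm by (intro borel_measurable_times borel_measurable_const)
          show ?thesis
            using g01 e' by (intro integrable_prob_torus[OF P[OF k] gm', where B=e']) auto
        qed
        have "integral\<^sup>L (\<nu> n k) (\<lambda>s. f (rot (- \<theta> n k) s)) - integral\<^sup>L (\<nu> n k) f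
              = integral\<^sup>L (\<nu> n k) (\<lambda>s. f (rot (- \<theta> n k) s) - f s)"
          using i1 i2 by simp
        moreover have "integral\<^sup>L (\<nu> n k) (\<lambda>s. f (rot (- \<theta> n k) s) - f s) \<le> integral\<^sup>L (\<nu> n k) (\<lambda>s. e' * g s)"
          using i1 i2 i3 pw[OF k] sp by (intro integral_mono) (auto simp: abs_le_iff)
        moreover have "- integral\<^sup>L (\<nu> n k) (\<lambda>s. e' * g s) \<le> integral\<^sup>L (\<nu> n k) (\<lambda>s. f (rot (- \<theta> n k) s) - f s)"
        proof -
          have pw2: "- (e' * g s) \<le> f (rot (- \<theta> n k) s) - f s" if "s \<in> space (\<nu> n k)" for s
          proof -
            have "\<bar>f (rot (- \<theta> n k) s) - f s\<bar> \<le> e' * g s" using pw[OF k] that sp by simp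
            then show ?thesis by (simp add: abs_le_iff)
          qed
          have "integral\<^sup>L (\<nu> n k) (\<lambda>s. - (e' * g s)) \<le> integral\<^sup>L (\<nu> n k) (\<lambda>s. f (rot (- \<theta> n k) s) - f s)"
            using i1 i2 i3 pw2 by (intro integral_mono) auto
          then show ?thesis by simp
        qed
        moreover have "integral\<^sup>L (\<nu> n k) (\<lambda>s. e' * g s) = e' * integral\<^sup>L (\<nu> n k) g" by simp
        ultimately show ?thesis by (simp add: abs_le_iff)
      qed
      have "\<bar>integral\<^sup>L (sum_meas K (\<lambda>k. rotate_meas (\<theta> n k) (\<nu> n k))) f - integral\<^sup>L (sum_meas K (\<nu> n)) f\<bar>
          = \<bar>\<Sum>k\<in>K. (integral\<^sup>L (\<nu> n k) (\<lambda>s. f (rot (- \<theta> n k) s)) - integral\<^sup>L (\<nu> n k) f)\<bar>"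
        by (simp add: I1 I2 sum_subtractf)
      also have "\<dots> \<le> (\<Sum>k\<in>K. \<bar>integral\<^sup>L (\<nu> n k) (\<lambda>s. f (rot (- \<theta> n k) s)) - integral\<^sup>L (\<nu> n k) f\<bar>)"
        by (rule sum_abs)
      also have "\<dots> \<le> (\<Sum>k\<in>K. e' * integral\<^sup>L (\<nu> n k) g)"
        by (intro sum_mono bnd)
      also have "\<dots> = e' * integral\<^sup>L (sum_meas K (\<nu> n)) g"
        by (simp add: I3 sum_distrib_left)
      also have "\<dots> \<le> e' * Bg"
        using Bg(2)[of n] e' by (intro mult_left_mono) (auto simp: K_def)
      also have "\<dots> < e" using e Bg by (simp add: e'_def)
      finally show "norm ((integral\<^sup>L (sum_meas {1..kn n} (\<lambda>k. rotate_meas (\<theta> n k) (\<nu> n k))) f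
              - integral\<^sup>L (sum_meas {1..kn n} (\<nu> n)) f) - 0) < e"
        by (simp add: K_def)
    qed
  qed
  have "(\<lambda>n. (integral\<^sup>L (sum_meas {1..kn n} (\<lambda>k. rotate_meas (\<theta> n k) (\<nu> n k))) f
              - integral\<^sup>L (sum_meas {1..kn n} (\<nu> n)) f) + integral\<^sup>L (sum_meas {1..kn n} (\<nu> n)) f)
        \<longlonglongrightarrow> 0 + integral\<^sup>L \<rho> f"
    using D conv tf unfolding conv_one_def by (intro tendsto_add) auto
  then show "(\<lambda>n. integral\<^sup>L (sum_meas {1..kn n} (\<lambda>k. rotate_meas (\<theta> n k) (\<nu> n k))) f) \<longlonglongrightarrow> integral\<^sup>L \<rho> f"
    by simp
qed



definition Lp :: "int^'d \<Rightarrow> complex^'d \<Rightarrow> real" where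
  "Lp p s = (\<Sum>i\<in>UNIV. of_int (p $ i) * imv s $ i)"

definition Pn :: "int^'d \<Rightarrow> real" where
  "Pn p = (\<Sum>i\<in>UNIV. \<bar>of_int (p $ i)\<bar>)"

lemma Pn_nonneg: "0 \<le> Pn p" unfolding Pn_def by (intro sum_nonneg) auto

lemma Lp_bound: assumes "s \<in> torus" shows "\<bar>Lp p s\<bar> \<le> Pn p"
proof -
  have "\<bar>Lp p s\<bar> \<le> (\<Sum>i\<in>UNIV. \<bar>of_int (p $ i) * imv s $ i\<bar>)" unfolding Lp_def by (rule sum_abs)
  also have "\<dots> \<le> (\<Sum>i\<in>UNIV. \<bar>of_int (p $ i)\<bar>)"
  proof (intro sum_mono)
    fix i
    have "\<bar>imv s $ i\<bar> \<le> 1" using abs_Im_le_cmod[of "s $ i"] assms by (simp add: imv_def torus_def)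
    then show "\<bar>of_int (p $ i) * imv s $ i\<bar> \<le> \<bar>of_int (p $ i)\<bar>"
      by (simp add: abs_mult mult_left_le)
  qed
  finally show ?thesis by (simp add: Pn_def)
qed

lemma Lp_meas: "(Lp p :: complex^'d \<Rightarrow> real) \<in> borel_measurable torus_borel"
proof -
  have "(\<lambda>s::complex^'d. \<Sum>i\<in>UNIV. of_int (p $ i) * Im (s $ i)) \<in> borel_measurable borel" by measurable
  then have "(\<lambda>s::complex^'d. \<Sum>i\<in>UNIV. of_int (p $ i) * Im (s $ i)) \<in> borel_measurable torus_borel"
    unfolding torus_borel_def by (rule measurable_restrict_space1)
  moreover have "(Lp p :: complex^'d \<Rightarrow> real) = (\<lambda>s::complex^'d. \<Sum>i\<in>UNIV. of_int (p $ i) * Im (s $ i))"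
    by (simp add: Lp_def imv_def fun_eq_iff)
  ultimately show ?thesis by simp
qed

lemma cmod_cis_minus_1': "cmod (cis (-t) - 1) = sqrt (2 * (1 - cos t))"
  using cmod_cis_minus_1[of t] by (metis norm_ge_zero real_sqrt_unique)

lemma Lp_diff:
  assumes s: "s \<in> torus"
  shows "\<bar>Lp p (rot (-\<phi>) s) - Lp p s\<bar> \<le> Pn p * sqrt (2 * Tc \<phi>)"
proof -
  have comp: "\<bar>imv (rot (-\<phi>) s) $ i - imv s $ i\<bar> \<le> sqrt (2 * Tc \<phi>)" for i
  proof -
    have "imv (rot (-\<phi>) s) $ i - imv s $ i = Im ((cis (- (\<phi> $ i)) - 1) * s $ i)"
      by (simp add: imv_def rot_def algebra_simps)
    also have "\<bar>\<dots>\<bar> \<le> cmod ((cis (- (\<phi> $ i)) - 1) * s $ i)" by (rule abs_Im_le_cmod)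
    also have "\<dots> = cmod (cis (- (\<phi> $ i)) - 1)" using s by (simp add: torus_def norm_mult)
    also have "\<dots> = sqrt (2 * (1 - cos (\<phi> $ i)))" by (rule cmod_cis_minus_1')
    also have "\<dots> \<le> sqrt (2 * Tc \<phi>)"
    proof -
      have "1 - cos (\<phi> $ i) \<le> Tc \<phi>"
        unfolding Tc_def by (rule member_le_sum) auto
      then show ?thesis by simp
    qed
    finally show ?thesis .
  qed
  have "Lp p (rot (-\<phi>) s) - Lp p s = (\<Sum>i\<in>UNIV. of_int (p $ i) * (imv (rot (-\<phi>) s) $ i - imv s $ i))"
    by (simp add: Lp_def sum_subtractf[symmetric] algebra_simps)
  also have "\<bar>\<dots>\<bar> \<le> (\<Sum>i\<in>UNIV. \<bar>of_int (p $ i) * (imv (rot (-\<phi>) s) $ i - imv s $ i)\<bar>)" by (rule sum_abs)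
  also have "\<dots> \<le> (\<Sum>i\<in>UNIV. \<bar>of_int (p $ i)\<bar> * sqrt (2 * Tc \<phi>))"
    by (intro sum_mono) (simp add: abs_mult comp mult_left_mono)
  also have "\<dots> = Pn p * sqrt (2 * Tc \<phi>)" by (simp add: Pn_def sum_distrib_right)
  finally show ?thesis .
qed

lemma argv_rot:
  assumes s: "s \<in> torus" and b: "\<And>i. \<bar>Arg (s $ i) + \<phi> $ i\<bar> < pi"
  shows "argv (rot \<phi> s) = argv s + \<phi>"
proof -
  have "Arg (cis (\<phi> $ i) * s $ i) = Arg (s $ i) + \<phi> $ i" for i
  proof -
    have n1: "cmod (s $ i) = 1" using s by (simp add: torus_def)
    then have "s $ i \<noteq> 0" by auto
    then have "cis (Arg (s $ i)) = s $ i" using n1 by (simp add: cis_Arg sgn_div_norm)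
    then have "cis (\<phi> $ i) * s $ i = cis (Arg (s $ i) + \<phi> $ i)"
      by (metis cis_mult mult.commute)
    moreover have "Arg (s $ i) + \<phi> $ i \<in> {-pi<..pi}" using b[of i] by auto
    ultimately show ?thesis by (simp add: Arg_cis)
  qed
  then show ?thesis by (simp add: argv_def rot_def vec_eq_iff)
qed

lemma U_rot:
  assumes s: "s \<in> U_eps a" and \<phi>: "norm \<phi> < b" and ab: "a + b \<le> pi"
  shows "rot \<phi> s \<in> U_eps (a + b)"
proof -
  have st: "s \<in> torus" and na: "norm (argv s) < a" using s by (auto simp: U_eps_def)
  have "\<bar>Arg (s $ i) + \<phi> $ i\<bar> < pi" for i
  proof -
    have "\<bar>Arg (s $ i)\<bar> \<le> norm (argv s)" using component_le_norm_cart[of "argv s" i] by (simp add: argv_def)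
    moreover have "\<bar>\<phi> $ i\<bar> \<le> norm \<phi>" by (rule component_le_norm_cart)
    ultimately show ?thesis using na \<phi> ab by linarith
  qed
  then have "argv (rot \<phi> s) = argv s + \<phi>" using argv_rot[OF st] by blast
  then have "norm (argv (rot \<phi> s)) \<le> norm (argv s) + norm \<phi>" by (simp add: norm_triangle_ineq)
  then have "norm (argv (rot \<phi> s)) < a + b" using na \<phi> by linarith
  then show ?thesis using rot_torus[OF st] by (simp add: U_eps_def)
qed

lemma two_xd: fixes t x d :: real assumes "t > 0" shows "\<bar>2 * x * d\<bar> \<le> t * x\<^sup>2 + d\<^sup>2 / t"
proof -
  have "0 \<le> (t * \<bar>x\<bar> - \<bar>d\<bar>)\<^sup>2" by simp
  then have "2 * t * \<bar>x\<bar> * \<bar>d\<bar> \<le> t\<^sup>2 * x\<^sup>2 + d\<^sup>2"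
    by (simp add: power2_eq_square algebra_simps)
  then have "t * (2 * \<bar>x\<bar> * \<bar>d\<bar>) \<le> t * (t * x\<^sup>2 + d\<^sup>2 / t)"
    using assms by (simp add: power2_eq_square algebra_simps)
  then have "2 * \<bar>x\<bar> * \<bar>d\<bar> \<le> t * x\<^sup>2 + d\<^sup>2 / t" using assms by simp
  then show ?thesis by (simp add: abs_mult)
qed

lemma sq_upper:
  fixes t x y c :: real
  assumes t: "t > 0" and c: "\<bar>y - x\<bar> \<le> c"
  shows "y\<^sup>2 \<le> (1 + t) * x\<^sup>2 + (1 + 1/t) * c\<^sup>2"
proof -
  define d where "d = y - x"
  have y: "y = x + d" by (simp add: d_def)
  have dc: "d\<^sup>2 \<le> c\<^sup>2" using c by (simp add: d_def abs_le_square_iff[symmetric] power2_le_iff_abs_le) 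
  have "y\<^sup>2 = x\<^sup>2 + 2 * x * d + d\<^sup>2" by (simp add: y power2_eq_square algebra_simps)
  also have "\<dots> \<le> x\<^sup>2 + (t * x\<^sup>2 + d\<^sup>2 / t) + d\<^sup>2" using two_xd[OF t, of x d] by linarith
  also have "\<dots> = (1 + t) * x\<^sup>2 + (1 + 1/t) * d\<^sup>2" by (simp add: algebra_simps)
  also have "\<dots> \<le> (1 + t) * x\<^sup>2 + (1 + 1/t) * c\<^sup>2" using dc t by (intro add_left_mono mult_left_mono) auto
  finally show ?thesis .
qed

lemma sq_lower:
  fixes t x y c :: real
  assumes t: "t > 0" and c: "\<bar>y - x\<bar> \<le> c"
  shows "(1 - t) * x\<^sup>2 - (1/t) * c\<^sup>2 \<le> y\<^sup>2"
proof -
  define d where "d = y - x"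
  have y: "y = x + d" by (simp add: d_def)
  have dc: "d\<^sup>2 \<le> c\<^sup>2" using c by (simp add: d_def abs_le_square_iff[symmetric] power2_le_iff_abs_le)
  have "(1 - t) * x\<^sup>2 - (1/t) * c\<^sup>2 \<le> (1 - t) * x\<^sup>2 - (1/t) * d\<^sup>2"
    using dc t by (simp add: divide_right_mono)
  also have "\<dots> \<le> x\<^sup>2 + 2 * x * d + d\<^sup>2"
    using two_xd[OF t, of x d] by (simp add: algebra_simps)
  also have "\<dots> = y\<^sup>2" by (simp add: y power2_eq_square algebra_simps)
  finally show ?thesis .
qed



definition hh :: "int^'d \<Rightarrow> real \<Rightarrow> complex^'d \<Rightarrow> real" where
  "hh p e s = indicator (U_eps e) s * (Lp p s)\<^sup>2"

lemma hh_meas: "hh p e \<in> borel_measurable torus_borel"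
proof -
  have "indicator (U_eps e :: (complex^'d) set) \<in> borel_measurable torus_borel"
    using U_eps_sets by (rule borel_measurable_indicator)
  then show ?thesis unfolding hh_def using Lp_meas[of p] by measurable
qed

lemma hh_bound: "s \<in> torus \<Longrightarrow> \<bar>hh p e s\<bar> \<le> (Pn p)\<^sup>2"
proof -
  assume s: "s \<in> torus"
  have "\<bar>Lp p s\<bar> \<le> Pn p" by (rule Lp_bound[OF s])
  then have "(Lp p s)\<^sup>2 \<le> (Pn p)\<^sup>2" using Pn_nonneg[of p] by (simp add: power2_le_iff_abs_le)
  then show ?thesis by (auto simp: hh_def indicator_def)
qed

lemma hh_nonneg: "0 \<le> hh p e s" by (simp add: hh_def)

lemma pw_upper:
  assumes s: "s \<in> torus" and e: "0 < e" "e < 1" and \<phi>: "norm \<phi> < e/2"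
  shows "hh p e (rot (-\<phi>) s) \<le> (1+e) * hh p (3*e/2) s + (1 + 1/e) * ((Pn p)\<^sup>2 * (2 * Tc \<phi>))"
proof (cases "rot (-\<phi>) s \<in> U_eps e")
  case True
  have "rot \<phi> (rot (-\<phi>) s) \<in> U_eps (e + e/2)"
    using U_rot[OF True \<phi>] e pi_gt3 by simp
  then have s3: "s \<in> U_eps (3*e/2)" by (simp add: rot_rot add_divide_distrib)
  have "(Lp p (rot (-\<phi>) s))\<^sup>2 \<le> (1+e) * (Lp p s)\<^sup>2 + (1 + 1/e) * (Pn p * sqrt (2 * Tc \<phi>))\<^sup>2"
    using e by (intro sq_upper Lp_diff[OF s])
  also have "(Pn p * sqrt (2 * Tc \<phi>))\<^sup>2 = (Pn p)\<^sup>2 * (2 * Tc \<phi>)"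
    using Tc_nonneg[of \<phi>] by (simp add: power_mult_distrib)
  finally show ?thesis using True s3 by (simp add: hh_def)
next
  case False
  have "0 \<le> (1+e) * hh p (3*e/2) s + (1 + 1/e) * ((Pn p)\<^sup>2 * (2 * Tc \<phi>))"
    using e Tc_nonneg[of \<phi>] hh_nonneg[of p "3*e/2" s] by (intro add_nonneg_nonneg mult_nonneg_nonneg) auto
  then show ?thesis using False by (simp add: hh_def)
qed

lemma pw_lower:
  assumes s: "s \<in> torus" and e: "0 < e" "e < 1" and \<phi>: "norm \<phi> < e/2"
  shows "(1-e) * hh p (e/2) s - (1/e) * ((Pn p)\<^sup>2 * (2 * Tc \<phi>)) \<le> hh p e (rot (-\<phi>) s)"
proof (cases "s \<in> U_eps (e/2)")
  case True
  have "norm (-\<phi>) < e/2" using \<phi> by simp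
  from U_rot[OF True this] e pi_gt3 have r: "rot (-\<phi>) s \<in> U_eps e" by simp
  have "(1-e) * (Lp p s)\<^sup>2 - (1/e) * (Pn p * sqrt (2 * Tc \<phi>))\<^sup>2 \<le> (Lp p (rot (-\<phi>) s))\<^sup>2"
    using e by (intro sq_lower Lp_diff[OF s])
  also have "(Pn p * sqrt (2 * Tc \<phi>))\<^sup>2 = (Pn p)\<^sup>2 * (2 * Tc \<phi>)"
    using Tc_nonneg[of \<phi>] by (simp add: power_mult_distrib)
  finally show ?thesis using True r by (simp add: hh_def)
next
  case False
  have "0 \<le> (1/e) * ((Pn p)\<^sup>2 * (2 * Tc \<phi>))"
    using e Tc_nonneg[of \<phi>] by (intro mult_nonneg_nonneg) auto
  moreover have "hh p (e/2) s = 0" using False by (simp add: hh_def)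
  moreover have "0 \<le> hh p e (rot (-\<phi>) s)" by (rule hh_nonneg)
  ultimately show ?thesis by simp
qed

lemma per_n:
  fixes \<mu> :: "nat \<Rightarrow> (complex^'d) measure"
  assumes K: "finite K" and P: "\<And>k. k \<in> K \<Longrightarrow> prob_torus (\<mu> k)"
    and e: "0 < e" "e < 1" and \<phi>: "\<And>k. k \<in> K \<Longrightarrow> norm (\<phi> k) < e/2"
  shows "integral\<^sup>L (sum_meas K (\<lambda>k. rotate_meas (\<phi> k) (\<mu> k))) (hh p e)
           \<le> (1+e) * integral\<^sup>L (sum_meas K \<mu>) (hh p (3*e/2)) + (1 + 1/e) * ((Pn p)\<^sup>2 * (2 * (\<Sum>k\<in>K. Tc (\<phi> k))))"
    and "(1-e) * integral\<^sup>L (sum_meas K \<mu>) (hh p (e/2)) - (1/e) * ((Pn p)\<^sup>2 * (2 * (\<Sum>k\<in>K. Tc (\<phi> k))))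
           \<le> integral\<^sup>L (sum_meas K (\<lambda>k. rotate_meas (\<phi> k) (\<mu> k))) (hh p e)"
proof -
  have R: "integral\<^sup>L (sum_meas K (\<lambda>k. rotate_meas (\<phi> k) (\<mu> k))) (hh p e)
        = (\<Sum>k\<in>K. integral\<^sup>L (\<mu> k) (\<lambda>s. hh p e (rot (- \<phi> k) s)))"
    by (rule int_sum_rot[where \<mu>=\<mu>, OF K P hh_meas hh_bound])
  have S: "integral\<^sup>L (sum_meas K \<mu>) (hh p e') = (\<Sum>k\<in>K. integral\<^sup>L (\<mu> k) (hh p e'))" for e'
    by (rule int_sum_prob[where \<mu>=\<mu>, OF K P hh_meas hh_bound])
  have sp: "space (\<mu> k) = torus" if "k \<in> K" for k
    using P[OF that] sets_eq_imp_space_eq[of "\<mu> k" torus_borel] by (simp add: prob_torus_def)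
  have ps: "prob_space (\<mu> k)" if "k \<in> K" for k using P[OF that] by (simp add: prob_torus_def)
  have iR: "integrable (\<mu> k) (\<lambda>s. hh p e (rot (- \<phi> k) s))" if "k \<in> K" for k
    by (intro integrable_prob_torus[OF P[OF that] rot_comp_meas[OF hh_meas], where B="(Pn p)\<^sup>2"] hh_bound rot_torus)
  have iS: "integrable (\<mu> k) (hh p e')" if "k \<in> K" for k e'
    by (rule integrable_prob_torus[OF P[OF that] hh_meas hh_bound])
  have ic: "integrable (\<mu> k) (\<lambda>s. c)" if "k \<in> K" for k and c :: real
    by (rule finite_measure.integrable_const[OF prob_space.finite_measure[OF ps[OF that]]])
  have iA: "integrable (\<mu> k) (\<lambda>s. a * hh p e' s + c)" if "k \<in> K" for k a e' c
    using iS[OF that] ic[OF that] by (intro Bochner_Integration.integrable_add integrable_mult_right) auto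
  have iB: "integrable (\<mu> k) (\<lambda>s. a * hh p e' s - c)" if "k \<in> K" for k a e' c
    using iS[OF that] ic[OF that] by (intro Bochner_Integration.integrable_diff integrable_mult_right) auto
  have up: "integral\<^sup>L (\<mu> k) (\<lambda>s. hh p e (rot (- \<phi> k) s))
        \<le> (1+e) * integral\<^sup>L (\<mu> k) (hh p (3*e/2)) + (1 + 1/e) * ((Pn p)\<^sup>2 * (2 * Tc (\<phi> k)))"
    if k: "k \<in> K" for k
  proof -
    have "integral\<^sup>L (\<mu> k) (\<lambda>s. hh p e (rot (- \<phi> k) s))
        \<le> integral\<^sup>L (\<mu> k) (\<lambda>s. (1+e) * hh p (3*e/2) s + (1 + 1/e) * ((Pn p)\<^sup>2 * (2 * Tc (\<phi> k))))"
      using iR[OF k] iA[OF k] pw_upper[OF _ e \<phi>[OF k]] sp[OF k] by (intro integral_mono) auto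
    also have "\<dots> = (1+e) * integral\<^sup>L (\<mu> k) (hh p (3*e/2)) + (1 + 1/e) * ((Pn p)\<^sup>2 * (2 * Tc (\<phi> k)))"
      using iS[OF k] ic[OF k] prob_space.prob_space[OF ps[OF k]] by (simp add: Bochner_Integration.integral_add)
    finally show ?thesis .
  qed
  have lo: "(1-e) * integral\<^sup>L (\<mu> k) (hh p (e/2)) - (1/e) * ((Pn p)\<^sup>2 * (2 * Tc (\<phi> k)))
        \<le> integral\<^sup>L (\<mu> k) (\<lambda>s. hh p e (rot (- \<phi> k) s))"
    if k: "k \<in> K" for k
  proof -
    have "(1-e) * integral\<^sup>L (\<mu> k) (hh p (e/2)) - (1/e) * ((Pn p)\<^sup>2 * (2 * Tc (\<phi> k)))
        = integral\<^sup>L (\<mu> k) (\<lambda>s. (1-e) * hh p (e/2) s - (1/e) * ((Pn p)\<^sup>2 * (2 * Tc (\<phi> k))))"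
      using iS[OF k] ic[OF k] prob_space.prob_space[OF ps[OF k]] by (simp add: Bochner_Integration.integral_diff)
    also have "\<dots> \<le> integral\<^sup>L (\<mu> k) (\<lambda>s. hh p e (rot (- \<phi> k) s))"
      using iR[OF k] iB[OF k] pw_lower[OF _ e \<phi>[OF k]] sp[OF k] by (intro integral_mono) auto
    finally show ?thesis .
  qed
  show "integral\<^sup>L (sum_meas K (\<lambda>k. rotate_meas (\<phi> k) (\<mu> k))) (hh p e)
           \<le> (1+e) * integral\<^sup>L (sum_meas K \<mu>) (hh p (3*e/2)) + (1 + 1/e) * ((Pn p)\<^sup>2 * (2 * (\<Sum>k\<in>K. Tc (\<phi> k))))"
    unfolding R S using sum_mono[OF up]
    by (simp add: sum.distrib sum_distrib_left)
  show "(1-e) * integral\<^sup>L (sum_meas K \<mu>) (hh p (e/2)) - (1/e) * ((Pn p)\<^sup>2 * (2 * (\<Sum>k\<in>K. Tc (\<phi> k))))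
           \<le> integral\<^sup>L (sum_meas K (\<lambda>k. rotate_meas (\<phi> k) (\<mu> k))) (hh p e)"
    unfolding R S using sum_mono[OF lo]
    by (simp add: sum_subtractf sum_distrib_left)
qed

lemma theta_small:
  fixes \<theta> :: "nat \<Rightarrow> nat \<Rightarrow> real^'d"
  assumes range: "\<And>n k i. 1 \<le> n \<Longrightarrow> k \<in> {1..kn n} \<Longrightarrow> - pi < \<theta> n k $ i \<and> \<theta> n k $ i \<le> pi"
    and tot: "(\<lambda>n. \<Sum>k\<in>{1..kn n}. Tc (\<theta> n k)) \<longlonglongrightarrow> 0"
    and \<eta>: "\<eta> > 0"
  shows "eventually (\<lambda>n. 1 \<le> n \<and> (\<forall>k\<in>{1..kn n}. norm (\<theta> n k) < \<eta>)) sequentially"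
proof -
  define \<eta>1 where "\<eta>1 = min (\<eta> / real CARD('d)) pi"
  have \<eta>1: "0 < \<eta>1" "\<eta>1 \<le> pi" "\<eta>1 \<le> \<eta> / real CARD('d)" using \<eta> by (auto simp: \<eta>1_def)
  have c0: "cos \<eta>1 < 1" using cos_monotone_0_pi[of 0 \<eta>1] \<eta>1 by simp
  have ev: "eventually (\<lambda>n. \<bar>(\<Sum>k\<in>{1..kn n}. Tc (\<theta> n k))\<bar> < 1 - cos \<eta>1) sequentially"
    using tot c0 unfolding tendsto_iff by (auto simp: dist_real_def)
  have ev1: "eventually (\<lambda>n. 1 \<le> n) sequentially" by (rule eventually_ge_at_top)
  show ?thesis
    using ev ev1
  proof eventually_elim
    case (elim n)
    have "norm (\<theta> n k) < \<eta>" if k: "k \<in> {1..kn n}" for k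
    proof -
      have ci: "\<bar>\<theta> n k $ i\<bar> < \<eta>1" for i
      proof (rule ccontr)
        assume "\<not> \<bar>\<theta> n k $ i\<bar> < \<eta>1"
        then have ge: "\<eta>1 \<le> \<bar>\<theta> n k $ i\<bar>" by simp
        have "\<bar>\<theta> n k $ i\<bar> \<le> pi" using range[OF elim(2) k, of i] by auto
        then have "cos \<bar>\<theta> n k $ i\<bar> \<le> cos \<eta>1" using ge \<eta>1 by (intro cos_monotone_0_pi_le) auto
        then have A: "1 - cos \<eta>1 \<le> 1 - cos (\<theta> n k $ i)" by simp
        have "1 - cos (\<theta> n k $ i) \<le> Tc (\<theta> n k)" unfolding Tc_def by (rule member_le_sum) auto
        also have "\<dots> \<le> (\<Sum>k\<in>{1..kn n}. Tc (\<theta> n k))"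
          using k by (intro member_le_sum) (auto simp: Tc_nonneg)
        finally show False using A elim(1) by linarith
      qed
      have "norm (\<theta> n k) \<le> (\<Sum>i\<in>UNIV. \<bar>\<theta> n k $ i\<bar>)" by (rule norm_le_l1_cart)
      also have "\<dots> < (\<Sum>i\<in>(UNIV::'d set). \<eta>1)"
        using ci by (intro sum_strict_mono) auto
      also have "\<dots> = real CARD('d) * \<eta>1" by simp
      also have "\<dots> \<le> \<eta>" using \<eta>1(3) by (simp add: field_simps)
      finally show ?thesis .
    qed
    then show ?case using elim(2) by blast
  qed
qed



lemma set_int_hh:
  fixes M :: "(complex^'d) measure" and p :: "int^'d"
  shows "(\<integral>s \<in> U_eps e. ((\<Sum>i\<in>UNIV. of_int (p $ i) * imv s $ i))\<^sup>2 \<partial>M) = integral\<^sup>L M (hh p e)"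
  unfolding set_lebesgue_integral_def by (simp add: hh_def[abs_def] Lp_def)

lemma fl_scale: fixes c :: real assumes "c > 0" shows "filterlim (\<lambda>x::real. c * x) (at_right 0) (at_right 0)"
proof -
  have "((\<lambda>x::real. c * x) \<longlongrightarrow> 0) (at_right 0)" by (auto intro!: tendsto_eq_intros)
  moreover have "eventually (\<lambda>x::real. c * x \<in> {0<..} \<and> c * x \<noteq> 0) (at_right 0)"
    using assms by (intro eventually_at_rightI[where a=0 and b=1]) auto
  ultimately show ?thesis unfolding filterlim_at by auto
qed

lemma iv_part:
  fixes \<nu> :: "nat \<Rightarrow> nat \<Rightarrow> (complex ^ 'd) measure" and \<theta> :: "nat \<Rightarrow> nat \<Rightarrow> real ^ 'd"
    and Q :: "int ^ 'd \<Rightarrow> real"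
  assumes prob: "\<And>n k. 1 \<le> n \<Longrightarrow> k \<in> {1..kn n} \<Longrightarrow> prob_torus (\<nu> n k)"
    and range: "\<And>n k i. 1 \<le> n \<Longrightarrow> k \<in> {1..kn n} \<Longrightarrow> - pi < \<theta> n k $ i \<and> \<theta> n k $ i \<le> pi"
    and tot: "(\<lambda>n. \<Sum>k\<in>{1..kn n}. Tc (\<theta> n k)) \<longlonglongrightarrow> 0"
    and iv: "cond_iv (\<lambda>n. sum_meas {1..kn n} (\<nu> n)) Q"
  shows "cond_iv (\<lambda>n. sum_meas {1..kn n} (\<lambda>k. rotate_meas (\<theta> n k) (\<nu> n k))) Q"
  unfolding cond_iv_def Let_def set_int_hh
proof (intro allI)
  fix p :: "int^'d"
  define X where "X e n = integral\<^sup>L (sum_meas {1..kn n} (\<nu> n)) (hh p e)" for e n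
  define Y where "Y e n = integral\<^sup>L (sum_meas {1..kn n} (\<lambda>k. rotate_meas (\<theta> n k) (\<nu> n k))) (hh p e)" for e n
  define a where "a e = limsup (\<lambda>n. ereal (X e n))" for e
  define b where "b e = liminf (\<lambda>n. ereal (X e n))" for e
  define ta where "ta e = limsup (\<lambda>n. ereal (Y e n))" for e
  define bt where "bt e = liminf (\<lambda>n. ereal (Y e n))" for e
  define tt where "tt n = (\<Sum>k\<in>{1..kn n}. Tc (\<theta> n k))" for n
  have alim: "(a \<longlongrightarrow> ereal (Q p)) (at_right 0)" and blim: "(b \<longlongrightarrow> ereal (Q p)) (at_right 0)"
    using iv[unfolded cond_iv_def Let_def set_int_hh, rule_format, of p]
    unfolding a_def[abs_def] b_def[abs_def] X_def[abs_def] by auto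
  have ts: "eventually (\<lambda>n. 1 \<le> n \<and> (\<forall>k\<in>{1..kn n}. norm (\<theta> n k) < \<eta>)) sequentially" if "\<eta> > 0" for \<eta>
    by (rule theta_small[where \<theta>=\<theta> and kn=kn and \<eta>=\<eta>, OF range tot that])
  have I1: "ta e \<le> ereal (1+e) * a (3*e/2)" if e: "0 < e" "e < 1" for e
  proof -
    define E where "E n = (1 + 1/e) * ((Pn p)\<^sup>2 * (2 * tt n))" for n
    have Elim: "(\<lambda>n. ereal (E n)) \<longlonglongrightarrow> ereal 0"
      unfolding E_def using tot[folded tt_def] e by (intro tendsto_ereal) (auto intro!: tendsto_eq_intros)
    have ev0: "eventually (\<lambda>n. 1 \<le> n \<and> (\<forall>k\<in>{1..kn n}. norm (\<theta> n k) < e/2)) sequentially"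
      using e(1) by (intro ts) simp
    have ev: "eventually (\<lambda>n. ereal (Y e n) \<le> ereal (E n) + ereal (1+e) * ereal (X (3*e/2) n)) sequentially"
      using ev0
    proof (elim eventually_mono)
      fix n assume n: "1 \<le> n \<and> (\<forall>k\<in>{1..kn n}. norm (\<theta> n k) < e/2)"
      have "Y e n \<le> (1+e) * X (3*e/2) n + E n"
        unfolding Y_def X_def E_def tt_def
        using n prob by (intro per_n(1)) (auto simp: e)
      then show "ereal (Y e n) \<le> ereal (E n) + ereal (1+e) * ereal (X (3*e/2) n)" by simp
    qed
    have "ta e \<le> limsup (\<lambda>n. ereal (E n) + ereal (1+e) * ereal (X (3*e/2) n))"
      unfolding ta_def by (rule Limsup_mono[OF ev])
    also have "\<dots> = ereal 0 + limsup (\<lambda>n. ereal (1+e) * ereal (X (3*e/2) n))"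
      by (rule ereal_limsup_lim_add[OF Elim]) simp
    also have "\<dots> = ereal (1+e) * a (3*e/2)"
    proof -
      have "limsup (\<lambda>n. ereal (1+e) * ereal (X (3*e/2) n)) = ereal (1+e) * limsup (\<lambda>n. ereal (X (3*e/2) n))"
        by (rule limsup_ereal_mult_left) (use e in simp)
      then show ?thesis unfolding a_def by (metis add.left_neutral zero_ereal_def)
    qed
    finally show ?thesis .
  qed
  have I2: "ereal (1-e) * b (e/2) \<le> bt e" if e: "0 < e" "e < 1" for e
  proof -
    define E where "E n = - ((1/e) * ((Pn p)\<^sup>2 * (2 * tt n)))" for n
    have Elim: "(\<lambda>n. ereal (E n)) \<longlonglongrightarrow> ereal 0"
      unfolding E_def using tot[folded tt_def] e by (intro tendsto_ereal) (auto intro!: tendsto_eq_intros)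
    have ev0: "eventually (\<lambda>n. 1 \<le> n \<and> (\<forall>k\<in>{1..kn n}. norm (\<theta> n k) < e/2)) sequentially"
      using e(1) by (intro ts) simp
    have ev: "eventually (\<lambda>n. ereal (E n) + ereal (1-e) * ereal (X (e/2) n) \<le> ereal (Y e n)) sequentially"
      using ev0
    proof (elim eventually_mono)
      fix n assume n: "1 \<le> n \<and> (\<forall>k\<in>{1..kn n}. norm (\<theta> n k) < e/2)"
      have "(1-e) * X (e/2) n + E n \<le> Y e n"
        unfolding Y_def X_def E_def tt_def
        using n prob per_n(2)[of "{1..kn n}" "\<nu> n" e "\<theta> n" p] e by auto
      then show "ereal (E n) + ereal (1-e) * ereal (X (e/2) n) \<le> ereal (Y e n)" by simp
    qed
    have "ereal (1-e) * b (e/2) = ereal 0 + liminf (\<lambda>n. ereal (1-e) * ereal (X (e/2) n))"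
    proof -
      have "liminf (\<lambda>n. ereal (1-e) * ereal (X (e/2) n)) = ereal (1-e) * liminf (\<lambda>n. ereal (X (e/2) n))"
        by (rule Liminf_ereal_mult_left) (use e in simp_all)
      then show ?thesis unfolding b_def by (metis add.left_neutral zero_ereal_def)
    qed
    also have "\<dots> = liminf (\<lambda>n. ereal (E n) + ereal (1-e) * ereal (X (e/2) n))"
      by (rule ereal_liminf_lim_add[OF Elim, symmetric]) simp
    also have "\<dots> \<le> bt e"
      unfolding bt_def by (rule Liminf_mono[OF ev])
    finally show ?thesis .
  qed
  have I3: "bt e \<le> ta e" for e
    unfolding ta_def bt_def by (rule Liminf_le_Limsup) simp
  have hi: "((\<lambda>e. ereal (1+e) * a (3*e/2)) \<longlongrightarrow> ereal (Q p)) (at_right 0)"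
  proof -
    have "((\<lambda>e. a (3/2 * e)) \<longlongrightarrow> ereal (Q p)) (at_right 0)"
      by (rule filterlim_compose[OF alim fl_scale]) simp
    then have a': "((\<lambda>e. a (3*e/2)) \<longlongrightarrow> ereal (Q p)) (at_right 0)" by simp
    have "((\<lambda>e::real. ereal (1+e)) \<longlongrightarrow> ereal (1+0)) (at_right 0)"
      by (intro tendsto_ereal tendsto_intros)
    from tendsto_mult_ereal[OF this a'] show ?thesis by simp
  qed
  have lo: "((\<lambda>e. ereal (1-e) * b (e/2)) \<longlongrightarrow> ereal (Q p)) (at_right 0)"
  proof -
    have "((\<lambda>e. b (1/2 * e)) \<longlongrightarrow> ereal (Q p)) (at_right 0)"
      by (rule filterlim_compose[OF blim fl_scale]) simp
    then have b': "((\<lambda>e. b (e/2)) \<longlongrightarrow> ereal (Q p)) (at_right 0)" by simp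
    have "((\<lambda>e::real. ereal (1-e)) \<longlongrightarrow> ereal (1-0)) (at_right 0)"
      by (intro tendsto_ereal tendsto_intros)
    from tendsto_mult_ereal[OF this b'] show ?thesis by simp
  qed
  have ev01: "eventually (\<lambda>e::real. 0 < e \<and> e < 1) (at_right 0)"
    by (intro eventually_at_rightI[where a=0 and b=1]) auto
  have "(ta \<longlongrightarrow> ereal (Q p)) (at_right 0)"
  proof (rule tendsto_sandwich[OF _ _ lo hi])
    show "eventually (\<lambda>e. ereal (1-e) * b (e/2) \<le> ta e) (at_right 0)"
      using ev01 by eventually_elim (metis I2 I3 order_trans)
    show "eventually (\<lambda>e. ta e \<le> ereal (1+e) * a (3*e/2)) (at_right 0)"
      using ev01 by eventually_elim (rule I1, auto)
  qed
  moreover have "(bt \<longlongrightarrow> ereal (Q p)) (at_right 0)"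
  proof (rule tendsto_sandwich[OF _ _ lo hi])
    show "eventually (\<lambda>e. ereal (1-e) * b (e/2) \<le> bt e) (at_right 0)"
      using ev01 by eventually_elim (rule I2, auto)
    show "eventually (\<lambda>e. bt e \<le> ereal (1+e) * a (3*e/2)) (at_right 0)"
      using ev01 by eventually_elim (metis I1 I3 order_trans)
  qed
  ultimately show "((\<lambda>\<epsilon>. limsup (\<lambda>n. ereal (integral\<^sup>L (sum_meas {1..kn n} (\<lambda>k. rotate_meas (\<theta> n k) (\<nu> n k))) (hh p \<epsilon>)))) \<longlongrightarrow> ereal (Q p)) (at_right 0) \<and>
        ((\<lambda>\<epsilon>. liminf (\<lambda>n. ereal (integral\<^sup>L (sum_meas {1..kn n} (\<lambda>k. rotate_meas (\<theta> n k) (\<nu> n k))) (hh p \<epsilon>)))) \<longlongrightarrow> ereal (Q p)) (at_right 0)"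
    unfolding ta_def[abs_def] bt_def[abs_def] Y_def[abs_def] by auto
qed



theorem proposition4p3:
  fixes \<nu> :: "nat \<Rightarrow> nat \<Rightarrow> (complex ^ 'd) measure"
    and kn :: "nat \<Rightarrow> nat"
    and \<theta> :: "nat \<Rightarrow> nat \<Rightarrow> real ^ 'd"
    and Q :: "int ^ 'd \<Rightarrow> real"
  assumes prob: "\<And>n k. 1 \<le> n \<Longrightarrow> k \<in> {1..kn n} \<Longrightarrow> prob_torus (\<nu> n k)"
    and theta_range: "\<And>n k i. 1 \<le> n \<Longrightarrow> k \<in> {1..kn n} \<Longrightarrow> - pi < \<theta> n k $ i \<and> \<theta> n k $ i \<le> pi"
    and theta_lim: "(\<lambda>n. \<Sum>k\<in>{1..kn n}. (\<chi> i. 1 - cos (\<theta> n k $ i))) \<longlonglongrightarrow> (0 :: real ^ 'd)"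
    and iii: "cond_iii (\<lambda>n. sum_meas {1..kn n} (\<nu> n))"
    and iv: "cond_iv (\<lambda>n. sum_meas {1..kn n} (\<nu> n)) Q"
  shows "cond_iii (\<lambda>n. sum_meas {1..kn n} (\<lambda>k. rotate_meas (\<theta> n k) (\<nu> n k)))
       \<and> cond_iv (\<lambda>n. sum_meas {1..kn n} (\<lambda>k. rotate_meas (\<theta> n k) (\<nu> n k))) Q
       \<and> (\<forall>\<rho> \<in> M1. conv_one (\<lambda>n. sum_meas {1..kn n} (\<nu> n)) \<rho> \<longrightarrow>
              conv_one (\<lambda>n. sum_meas {1..kn n} (\<lambda>k. rotate_meas (\<theta> n k) (\<nu> n k))) \<rho>)"
proof -
  have tot: "(\<lambda>n. \<Sum>k\<in>{1..kn n}. Tc (\<theta> n k)) \<longlonglongrightarrow> 0"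
  proof -
    have eq: "(\<Sum>k\<in>{1..kn n}. Tc (\<theta> n k))
        = (\<Sum>i\<in>UNIV. (\<Sum>k\<in>{1..kn n}. (\<chi> i. 1 - cos (\<theta> n k $ i))) $ i)" for n
      unfolding Tc_def sum_component vec_lambda_beta by (rule sum.swap)
    have "(\<lambda>n. \<Sum>i\<in>UNIV. (\<Sum>k\<in>{1..kn n}. (\<chi> i. 1 - cos (\<theta> n k $ i))) $ i)
          \<longlonglongrightarrow> (\<Sum>i\<in>UNIV. (0::real^'d) $ i)"
      by (intro tendsto_sum tendsto_vec_nth theta_lim)
    then have "(\<lambda>n. \<Sum>i\<in>UNIV. (\<Sum>k\<in>{1..kn n}. (\<chi> i. 1 - cos (\<theta> n k $ i))) $ i) \<longlonglongrightarrow> 0"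
      by (simp only: zero_index sum.neutral_const)
    then show ?thesis unfolding eq .
  qed
  have conv: "conv_one (\<lambda>n. sum_meas {1..kn n} (\<lambda>k. rotate_meas (\<theta> n k) (\<nu> n k))) \<rho>"
    if "conv_one (\<lambda>n. sum_meas {1..kn n} (\<nu> n)) \<rho>" for \<rho>
    by (rule conv_part[where \<nu>=\<nu> and \<theta>=\<theta> and kn=kn, OF prob tot that])
  have iv': "cond_iv (\<lambda>n. sum_meas {1..kn n} (\<lambda>k. rotate_meas (\<theta> n k) (\<nu> n k))) Q"
    by (rule iv_part[where \<nu>=\<nu> and \<theta>=\<theta> and kn=kn, OF prob theta_range tot iv])
  have iii': "cond_iii (\<lambda>n. sum_meas {1..kn n} (\<lambda>k. rotate_meas (\<theta> n k) (\<nu> n k)))"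
    using iii conv unfolding cond_iii_def by blast
  show ?thesis using iii' iv' conv by blast
qed

end
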